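(* Let $G=(V,E,w_G)$ be a directed graph with non-negative integer edge weights, $n=|V|$, $s\in V$, and $1\le h\le n$ an integer. Let $C\subseteq V$ contain $s$ and, for every pair of nodes $u,v$ for which the shortest path from $u$ to $v$ in $G$ consists of exactly $\lceil h/2\rceil$ nodes, at least one node of one of these shortest paths. For each $x\in C$ let $\tilde d(x,\cdot)$ satisfy $\mathrm{dist}_G(x,v)\le \tilde d(x,v)\le 2\,\mathrm{dist}^h_G(x,v)$ for all $v\in V$. Let $H=(C,C^2,w_H)$ with $w_H(x,y)=\tilde d(x,y)$. Let $G'=(V,E\cup(\{s\}\times C),w_{G'})$ where $w_{G'}(u,v)=\mathrm{dist}_H(u,v)$ for $(u,v)\in(\{s\}\times C)\setminus E$, $w_{G'}(u,v)=2w_G(u,v)$ for $(u,v)\in E\setminus(\{s\}\times C)$, and $w_{G'}(u,v)=\min(\mathrm{dist}_H(u,v),2w_G(u,v))$ for $(u,v)\in E\cap(\{s\}\times C)$. Then for every node $v\in V$, $\mathrm{dist}_G(s,v)\le \mathrm{dist}_{G'}(s,v)\le 2\,\mathrm{dist}_G(s,v)$.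
   Context: For a weighted directed graph, $\mathrm{dist}(u,v)$ denotes the minimum weight of a directed path from $u$ to $v$. For an integer $h\ge1$, the $h$-hop distance $\mathrm{dist}^h(u,v)$ is the minimum weight among all directed paths from $u$ to $v$ with at most $h$ edges. *)

theory Defs
  imports Main "HOL-Library.Extended_Nat"
begin

definition is_path :: "'a set \<Rightarrow> ('a \<times> 'a) set \<Rightarrow> 'a list \<Rightarrow> bool" where
  "is_path V E p \<longleftrightarrow> p \<noteq> [] \<and> set p \<subseteq> V \<and> distinct p \<and>
     (\<forall>i. Suc i < length p \<longrightarrow> (p ! i, p ! Suc i) \<in> E)"

definition path_weight :: "('a \<Rightarrow> 'a \<Rightarrow> enat) \<Rightarrow> 'a list \<Rightarrow> enat" where
  "path_weight w p = sum_list (map (\<lambda>(a, b). w a b) (zip p (tl p)))"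

definition paths_between :: "'a set \<Rightarrow> ('a \<times> 'a) set \<Rightarrow> 'a \<Rightarrow> 'a \<Rightarrow> 'a list set" where
  "paths_between V E u v = {p. is_path V E p \<and> hd p = u \<and> last p = v}"

definition gdist :: "'a set \<Rightarrow> ('a \<times> 'a) set \<Rightarrow> ('a \<Rightarrow> 'a \<Rightarrow> enat) \<Rightarrow> 'a \<Rightarrow> 'a \<Rightarrow> enat" where
  "gdist V E w u v = (INF p \<in> paths_between V E u v. path_weight w p)"

text \<open>h-hop distance: minimum weight over u-v paths with at most h edges.\<close>
definition hop_dist :: "'a set \<Rightarrow> ('a \<times> 'a) set \<Rightarrow> ('a \<Rightarrow> 'a \<Rightarrow> enat) \<Rightarrow> nat \<Rightarrow> 'a \<Rightarrow> 'a \<Rightarrow> enat" where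
  "hop_dist V E w h u v =
     (INF p \<in> {p \<in> paths_between V E u v. length p \<le> Suc h}. path_weight w p)"

definition shortest_path :: "'a set \<Rightarrow> ('a \<times> 'a) set \<Rightarrow> ('a \<Rightarrow> 'a \<Rightarrow> enat) \<Rightarrow> 'a \<Rightarrow> 'a \<Rightarrow> 'a list \<Rightarrow> bool" where
  "shortest_path V E w u v p \<longleftrightarrow> p \<in> paths_between V E u v \<and> path_weight w p = gdist V E w u v"

end

theory Submission
  imports Defs
begin

fun pw :: "('a \<Rightarrow> 'a \<Rightarrow> enat) \<Rightarrow> 'a list \<Rightarrow> enat" where
  "pw w [] = 0"
| "pw w [a] = 0"
| "pw w (a # b # r) = w a b + pw w (b # r)"

fun wk :: "('a \<times> 'a) set \<Rightarrow> 'a list \<Rightarrow> bool" where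
  "wk E [] = True"
| "wk E [a] = True"
| "wk E (a # b # r) = ((a, b) \<in> E \<and> wk E (b # r))"

lemma pw_eq: "path_weight w p = pw w p"
  by (induction w p rule: pw.induct) (auto simp: path_weight_def)

lemma wk_iff: "wk E p \<longleftrightarrow> (\<forall>i. Suc i < length p \<longrightarrow> (p ! i, p ! Suc i) \<in> E)"
proof (induction E p rule: wk.induct)
  case (3 E a b r)
  show ?case
  proof
    assume "wk E (a # b # r)"
    then show "\<forall>i. Suc i < length (a # b # r) \<longrightarrow> ((a # b # r) ! i, (a # b # r) ! Suc i) \<in> E"
      using 3 by (auto simp: less_Suc_eq_0_disj)
  next
    assume A: "\<forall>i. Suc i < length (a # b # r) \<longrightarrow> ((a # b # r) ! i, (a # b # r) ! Suc i) \<in> E"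
    have "(a, b) \<in> E" using A[rule_format, of 0] by simp
    moreover have "\<forall>i. Suc i < length (b # r) \<longrightarrow> ((b # r) ! i, (b # r) ! Suc i) \<in> E"
      using A by (metis Suc_less_eq length_Cons nth_Cons_Suc)
    ultimately show "wk E (a # b # r)" using 3 by simp
  qed
qed auto

lemma is_path_iff: "is_path V E p \<longleftrightarrow> p \<noteq> [] \<and> set p \<subseteq> V \<and> distinct p \<and> wk E p"
  unfolding is_path_def wk_iff by auto

lemma pw_append: "pw w (xs @ y # zs) = pw w (xs @ [y]) + pw w (y # zs)"
  by (induction xs rule: pw.induct[of _ w]) (auto simp: add.assoc)

lemma wk_append: "wk E (xs @ y # zs) \<Longrightarrow> wk E (y # zs)"
  by (induction xs rule: wk.induct[of _ E]) auto

lemma shortcut: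
  assumes "wk E q" "q \<noteq> []" "set q \<subseteq> V"
  shows "\<exists>p. is_path V E p \<and> hd p = hd q \<and> last p = last q \<and> pw w p \<le> pw w q"
  using assms
proof (induction E q rule: wk.induct)
  case (2 E a)
  then show ?case by (intro exI[of _ "[a]"]) (auto simp: is_path_iff)
next
  case (3 E a b r)
  then obtain p where p: "is_path V E p" "hd p = b" "last p = last (b # r)" "pw w p \<le> pw w (b # r)"
    by auto
  show ?case
  proof (cases "a \<in> set p")
    case True
    then obtain ys zs where yz: "p = ys @ a # zs" by (meson split_list)
    have "wk E (a # zs)" using p(1) yz wk_append by (metis is_path_iff)
    moreover have "distinct (a # zs)" using p(1) yz by (simp add: is_path_iff)
    moreover have "set (a # zs) \<subseteq> V" using p(1) yz by (auto simp: is_path_iff)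
    ultimately have "is_path V E (a # zs)" by (simp add: is_path_iff)
    moreover have "pw w (a # zs) \<le> pw w p" using yz pw_append[of w ys a zs] by simp
    moreover have "pw w p \<le> pw w (a # b # r)" using p(4) by simp (metis add.commute le_iff_add add.assoc)
    moreover have "last (a # zs) = last p" using yz by simp
    ultimately show ?thesis using p(3) by (intro exI[of _ "a # zs"]) auto
  next
    case False
    have "p \<noteq> []" using p(1) by (simp add: is_path_iff)
    then obtain t where "p = b # t" using p(2) by (cases p) auto
    then have "is_path V E (a # p)" using p(1) False 3(2,4) by (auto simp: is_path_iff)
    moreover have "pw w (a # p) \<le> pw w (a # b # r)" using p(4) \<open>p = b # t\<close> by (simp add: add_left_mono)
    ultimately show ?thesis using p(3) \<open>p = b # t\<close> by (intro exI[of _ "a # p"]) auto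
  qed
qed auto

lemma INF_attained:
  fixes f :: "'b \<Rightarrow> enat"
  assumes "S \<noteq> {}"
  shows "\<exists>x\<in>S. (INF y\<in>S. f y) = f x"
proof -
  have "f ` S \<noteq> {}" using assms by auto
  then have "Inf (f ` S) \<in> f ` S" unfolding Inf_enat_def by (simp, meson LeastI ex_in_conv)
  then show ?thesis by auto
qed

lemma gdist_le: "p \<in> paths_between V E u v \<Longrightarrow> gdist V E w u v \<le> pw w p"
  unfolding gdist_def by (metis INF_lower pw_eq)

lemma gdist_self: "u \<in> V \<Longrightarrow> gdist V E w u u \<le> 0"
  using gdist_le[of "[u]" V E u u w] by (simp add: paths_between_def is_path_iff)

lemma gdist_attained:
  assumes "gdist V E w u v \<noteq> \<infinity>"
  shows "\<exists>p\<in>paths_between V E u v. gdist V E w u v = pw w p"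
proof -
  have "paths_between V E u v \<noteq> {}" using assms unfolding gdist_def by (auto simp: top_enat_def)
  then show ?thesis using INF_attained[of "paths_between V E u v" "path_weight w"]
    unfolding gdist_def pw_eq by auto
qed

lemma wk_app: "wk E (xs @ [y]) \<Longrightarrow> wk E (y # zs) \<Longrightarrow> wk E (xs @ y # zs)"
  by (induction xs rule: induct_list012) auto

lemma triangle:
  "gdist V E w u x \<le> gdist V E w u y + gdist V E w y x"
proof (cases "gdist V E w u y = \<infinity> \<or> gdist V E w y x = \<infinity>")
  case True then show ?thesis by auto
next
  case False
  then obtain p1 p2 where p1: "p1 \<in> paths_between V E u y" "gdist V E w u y = pw w p1"
    and p2: "p2 \<in> paths_between V E y x" "gdist V E w y x = pw w p2"
    using gdist_attained by metis
  have P1: "p1 \<noteq> []" "set p1 \<subseteq> V" "wk E p1" "hd p1 = u" "last p1 = y"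
    using p1(1) unfolding paths_between_def is_path_iff by auto
  have P2: "p2 \<noteq> []" "set p2 \<subseteq> V" "wk E p2" "hd p2 = y" "last p2 = x"
    using p2(1) unfolding paths_between_def is_path_iff by auto
  define ys where "ys = butlast p1"
  have ys: "p1 = ys @ [y]" unfolding ys_def using P1(1,5) append_butlast_last_id by metis
  define zs where "zs = tl p2"
  have zs: "p2 = y # zs" unfolding zs_def using P2(1,4) list.collapse by metis
  define q where "q = ys @ y # zs"
  have wq: "wk E q" unfolding q_def using P1(3) P2(3) ys zs wk_app by metis
  have sq: "set q \<subseteq> V" "q \<noteq> []" using P1(2) P2(2) ys zs unfolding q_def by auto
  obtain p where p: "is_path V E p" "hd p = hd q" "last p = last q" "pw w p \<le> pw w q"
    using shortcut[OF wq sq(2) sq(1)] by blast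
  have "hd q = u" using P1(4) ys unfolding q_def by (cases ys) auto
  moreover have "last q = x" using P2(5) zs unfolding q_def by auto
  ultimately have "p \<in> paths_between V E u x" using p unfolding paths_between_def by auto
  then have "gdist V E w u x \<le> pw w q" using gdist_le p(4) by (metis order_trans)
  also have "pw w q = pw w p1 + pw w p2" unfolding q_def ys zs by (rule pw_append)
  finally show ?thesis using p1 p2 by simp
qed

lemma walk_lower:
  assumes "wk E' q" "q \<noteq> []" "set q \<subseteq> V"
    and "\<forall>(a, b)\<in>E'. gdist V E w a b \<le> w' a b"
  shows "gdist V E w (hd q) (last q) \<le> pw w' q"
  using assms
proof (induction E' q rule: wk.induct)
  case (2 E a) then show ?case using gdist_self by simp
next
  case (3 E' a b r)
  then have "gdist V E w b (last (b # r)) \<le> pw w' (b # r)" by simp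
  moreover have "gdist V E w a b \<le> w' a b" using 3 by auto
  ultimately have "gdist V E w a b + gdist V E w b (last (b # r)) \<le> pw w' (a # b # r)"
    by (simp add: add_mono)
  then show ?case using triangle[of V E w a "last (b # r)" b] by simp
qed auto

lemma pw_scale:
  fixes w w' :: "'a \<Rightarrow> 'a \<Rightarrow> enat"
  assumes "wk E q" "\<forall>(a, b)\<in>E. w' a b \<le> 2 * w a b"
  shows "pw w' q \<le> 2 * pw w q"
  using assms
proof (induction E q rule: wk.induct)
  case (3 E a b r)
  then have "pw w' (b # r) \<le> 2 * pw w (b # r)" "w' a b \<le> 2 * w a b" by auto
  then show ?case by (simp add: distrib_left add_mono)
qed auto

lemma wk_mono: "wk E q \<Longrightarrow> E \<subseteq> E' \<Longrightarrow> wk E' q"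
  by (induction E q rule: wk.induct) auto

theorem lemma3p2:
  fixes V :: "'a set" and E :: "('a \<times> 'a) set" and wG :: "'a \<Rightarrow> 'a \<Rightarrow> nat"
    and s :: 'a and h :: nat and C :: "'a set" and dt :: "'a \<Rightarrow> 'a \<Rightarrow> enat"
  assumes finV: "finite V"
    and EV: "E \<subseteq> V \<times> V"
    and sV: "s \<in> V"
    and h1: "1 \<le> h" and hn: "h \<le> card V"
    and CV: "C \<subseteq> V" and sC: "s \<in> C"
    and hit: "\<forall>u\<in>V. \<forall>v\<in>V.
       (\<exists>p. shortest_path V E (\<lambda>a b. enat (wG a b)) u v p \<and> length p = (h + 1) div 2) \<longrightarrow>
       (\<exists>p x. shortest_path V E (\<lambda>a b. enat (wG a b)) u v p \<and> length p = (h + 1) div 2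
              \<and> x \<in> set p \<and> x \<in> C)"
    and dt_bounds: "\<forall>x\<in>C. \<forall>v\<in>V.
       gdist V E (\<lambda>a b. enat (wG a b)) x v \<le> dt x v \<and>
       dt x v \<le> 2 * hop_dist V E (\<lambda>a b. enat (wG a b)) h x v"
  shows "\<forall>v\<in>V.
     gdist V E (\<lambda>a b. enat (wG a b)) s v
       \<le> gdist V (E \<union> ({s} \<times> C))
           (\<lambda>a b. if (a, b) \<in> E \<and> (a, b) \<in> {s} \<times> C
                  then min (gdist C (C \<times> C) dt a b) (2 * enat (wG a b))
                  else if (a, b) \<in> E then 2 * enat (wG a b)
                  else gdist C (C \<times> C) dt a b) s v
     \<and> gdist V (E \<union> ({s} \<times> C))
           (\<lambda>a b. if (a, b) \<in> E \<and> (a, b) \<in> {s} \<times> C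
                  then min (gdist C (C \<times> C) dt a b) (2 * enat (wG a b))
                  else if (a, b) \<in> E then 2 * enat (wG a b)
                  else gdist C (C \<times> C) dt a b) s v
       \<le> 2 * gdist V E (\<lambda>a b. enat (wG a b)) s v"
proof (rule ballI)
  fix v assume vV: "v \<in> V"
  define w where "w = (\<lambda>a b. enat (wG a b))"
  define w' where "w' = (\<lambda>a b. if (a, b) \<in> E \<and> (a, b) \<in> {s} \<times> C
                  then min (gdist C (C \<times> C) dt a b) (2 * enat (wG a b))
                  else if (a, b) \<in> E then 2 * enat (wG a b)
                  else gdist C (C \<times> C) dt a b)"
  define E' where "E' = E \<union> ({s} \<times> C)"
  have edge: "gdist V E w a b \<le> w a b" if "(a, b) \<in> E" for a b
  proof (cases "a = b")
    case True
    have "a \<in> V" using that EV by auto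
    then have "gdist V E w a a \<le> 0" by (rule gdist_self)
    then show ?thesis using True by (metis order_trans zero_le)
  next
    case False
    have "[a, b] \<in> paths_between V E a b" using that EV False
      by (auto simp: paths_between_def is_path_iff)
    then show ?thesis using gdist_le[of "[a, b]"] by simp
  qed
  have hd: "gdist V E w a b \<le> gdist C (C \<times> C) dt a b" if "a \<in> C" "b \<in> C" for a b
    unfolding gdist_def[of C] pw_eq
  proof (rule INF_greatest)
    fix p assume p: "p \<in> paths_between C (C \<times> C) a b"
    have "\<forall>(x, y)\<in>C \<times> C. gdist V E w x y \<le> dt x y" using dt_bounds CV unfolding w_def by auto
    then show "gdist V E w a b \<le> pw dt p"
      using walk_lower[of "C \<times> C" p V E w dt] p CV
      unfolding paths_between_def is_path_iff by auto
  qed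
  have lowe: "\<forall>(a, b)\<in>E'. gdist V E w a b \<le> w' a b"
  proof (clarify)
    fix a b assume ab: "(a, b) \<in> E'"
    have e2: "gdist V E w a b \<le> 2 * enat (wG a b)" if "(a, b) \<in> E"
    proof -
      have "enat (wG a b) \<le> 2 * enat (wG a b)" unfolding mult_2 by simp
      then show ?thesis using edge[OF that] unfolding w_def by (rule order_trans[rotated])
    qed
    show "gdist V E w a b \<le> w' a b"
      using ab e2 hd sC unfolding w'_def E'_def by auto
  qed
  have lower: "gdist V E w s v \<le> gdist V E' w' s v"
    unfolding gdist_def[of V E'] pw_eq
  proof (rule INF_greatest)
    fix p assume p: "p \<in> paths_between V E' s v"
    then show "gdist V E w s v \<le> pw w' p"
      using walk_lower[of E' p V E w w'] lowe
      unfolding paths_between_def is_path_iff by auto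
  qed
  have upper: "gdist V E' w' s v \<le> 2 * gdist V E w s v"
  proof (cases "gdist V E w s v = \<infinity>")
    case True
    have "(2::enat) * \<infinity> = \<infinity>" by (simp add: imult_is_infinity)
    then show ?thesis using True by simp
  next
    case False
    then obtain p where p: "p \<in> paths_between V E s v" "gdist V E w s v = pw w p"
      using gdist_attained by metis
    have "p \<in> paths_between V E' s v" using p(1) wk_mono[of E p E']
      unfolding paths_between_def is_path_iff E'_def by auto
    then have g1: "gdist V E' w' s v \<le> pw w' p" by (rule gdist_le)
    have wkp: "wk E p" using p(1) unfolding paths_between_def is_path_iff by blast
    have sc: "\<forall>(a, b)\<in>E. w' a b \<le> 2 * w a b"
    proof (clarify)
      fix a b assume "(a, b) \<in> E"
      then show "w' a b \<le> 2 * w a b" unfolding w'_def w_def by (simp add: min_le_iff_disj)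
    qed
    have "pw w' p \<le> 2 * pw w p" by (rule pw_scale[OF wkp sc])
    then show ?thesis using p(2) g1 by (metis order_trans)
  qed
  show "gdist V E (\<lambda>a b. enat (wG a b)) s v \<le> gdist V (E \<union> ({s} \<times> C))
           (\<lambda>a b. if (a, b) \<in> E \<and> (a, b) \<in> {s} \<times> C
                  then min (gdist C (C \<times> C) dt a b) (2 * enat (wG a b))
                  else if (a, b) \<in> E then 2 * enat (wG a b)
                  else gdist C (C \<times> C) dt a b) s v
     \<and> gdist V (E \<union> ({s} \<times> C))
           (\<lambda>a b. if (a, b) \<in> E \<and> (a, b) \<in> {s} \<times> C
                  then min (gdist C (C \<times> C) dt a b) (2 * enat (wG a b))
                  else if (a, b) \<in> E then 2 * enat (wG a b)
                  else gdist C (C \<times> C) dt a b) s v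
       \<le> 2 * gdist V E (\<lambda>a b. enat (wG a b)) s v"
    using lower upper unfolding w_def w'_def E'_def by (rule conjI)
qed

end
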